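(* Let $X$ be a second countable locally compact Abelian group and let $K$ be a compact subgroup of $X$. Let $\xi_1,\xi_2,\xi_3$ be independent identically distributed random variables with values in $X$ and distribution $m_K$. Let $\alpha$ be a random variable with a Bernoulli distribution taking the values $0$ and $1$ with probability $\frac12$ each, independent of $(\xi_1,\xi_2,\xi_3)$. Then the following are equivalent: (i) the linear forms $2\xi_1$ and $\xi_1+\xi_2+2\alpha\xi_3$ are identically distributed; (ii) $K$ is a Corwin group.
   Context: $m_K$ denotes the Haar probability distribution on the compact subgroup $K$. A group $K$ is a Corwin group if $\{2x:x\in K\}=K$. *)

theory Defs
  imports "HOL-Analysis.Analysis" "HOL-Probability.Probability"
begin

definition subgroup_add :: "'a::ab_group_add set \<Rightarrow> bool" where
  "subgroup_add K \<longleftrightarrow> 0 \<in> K \<and> (\<forall>x\<in>K. \<forall>y\<in>K. x + y \<in> K) \<and> (\<forall>x\<in>K. - x \<in> K)"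

text \<open>mu is the Haar probability distribution m_K of the compact subgroup K, viewed as a
  Borel measure on the ambient group: a Borel probability measure concentrated on K and
  invariant under translations by elements of K.\<close>
definition haar_prob :: "'a::{topological_ab_group_add} set \<Rightarrow> 'a measure \<Rightarrow> bool" where
  "haar_prob K mu \<longleftrightarrow> prob_space mu \<and> sets mu = sets borel \<and> emeasure mu K = 1 \<and>
     (\<forall>x\<in>K. distr mu borel (\<lambda>y. x + y) = mu)"

definition corwin :: "'a::ab_group_add set \<Rightarrow> bool" where
  "corwin K \<longleftrightarrow> (\<lambda>x. x + x) ` K = K"

end

theory Submission
  imports Defs
begin

lemma haar_space:
  assumes "haar_prob K mu" shows "space mu = UNIV" "sets mu = sets borel"
  using assms unfolding haar_prob_def by (auto dest: sets_eq_imp_space_eq)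

lemma meas_cong_borel:
  assumes "sets mu = sets borel" "f \<in> borel_measurable borel"
  shows "f \<in> borel_measurable mu"
  using assms(2) unfolding measurable_cong_sets[OF assms(1) refl] .

lemma trans_meas: "(\<lambda>x. y + x :: 'a::{topological_ab_group_add, second_countable_topology}) \<in> borel_measurable borel"
  by (intro borel_measurable_add measurable_ident_sets refl measurable_const) auto

lemma trans_meas': "(\<lambda>x. x + y :: 'a::{topological_ab_group_add, second_countable_topology}) \<in> borel_measurable borel"
  by (intro borel_measurable_add measurable_ident_sets refl measurable_const) auto

lemma haar_shift:
  fixes K :: "'a::{topological_ab_group_add, second_countable_topology} set"
  assumes h: "haar_prob K mu" and y: "y \<in> K" and A: "A \<in> sets borel"
  shows "emeasure mu {x. x + y \<in> A} = emeasure mu A"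
proof -
  have d: "distr mu borel (\<lambda>x. y + x) = mu" using h y unfolding haar_prob_def by auto
  have m: "(\<lambda>x. y + x) \<in> measurable mu borel"
    using haar_space(2)[OF h] trans_meas by (rule meas_cong_borel)
  have "emeasure mu A = emeasure (distr mu borel (\<lambda>x. y + x)) A" using d by simp
  also have "\<dots> = emeasure mu ((\<lambda>x. y + x) -` A \<inter> space mu)"
    by (rule emeasure_distr[OF m A])
  also have "(\<lambda>x. y + x) -` A \<inter> space mu = {x. x + y \<in> A}"
    using haar_space(1)[OF h] by (auto simp: add.commute)
  finally show ?thesis by simp
qed

lemma haar_unique:
  fixes K :: "'a::{topological_ab_group_add, second_countable_topology} set"
  assumes h1: "haar_prob K mu" and h2: "haar_prob K nu" and K: "K \<in> sets borel"
  shows "mu = nu"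
proof (rule measure_eqI)
  interpret m: prob_space mu using h1 unfolding haar_prob_def by auto
  interpret n: prob_space nu using h2 unfolding haar_prob_def by auto
  interpret p: pair_sigma_finite mu nu by unfold_locales
  show "sets mu = sets nu" using haar_space(2)[OF h1] haar_space(2)[OF h2] by simp
  fix A assume "A \<in> sets mu"
  then have A: "A \<in> sets borel" using haar_space(2)[OF h1] by simp
  define S where "S = {p. fst p + snd p \<in> A}"
  have Ss: "S \<in> sets (mu \<Otimes>\<^sub>M nu)"
  proof -
    have "sets (mu \<Otimes>\<^sub>M nu) = sets (borel \<Otimes>\<^sub>M borel)"
      by (rule sets_pair_measure_cong) (simp_all add: haar_space[OF h1] haar_space[OF h2])
    moreover have "S \<in> sets (borel \<Otimes>\<^sub>M (borel :: 'a measure))"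
    proof -
      have "(\<lambda>p::'a\<times>'a. fst p + snd p) \<in> borel_measurable (borel \<Otimes>\<^sub>M borel)" by measurable
      from measurable_sets[OF this A] show ?thesis by (simp add: S_def space_pair_measure vimage_def)
    qed
    ultimately show ?thesis by simp
  qed
  have aeK1: "AE x in mu. x \<in> K"
    using h1 K by (subst m.AE_in_set_eq_1) (auto simp: haar_prob_def haar_space[OF h1] m.emeasure_eq_measure)
  have aeK2: "AE x in nu. x \<in> K"
    using h2 K by (subst n.AE_in_set_eq_1) (auto simp: haar_prob_def haar_space[OF h2] n.emeasure_eq_measure)
  have "emeasure (mu \<Otimes>\<^sub>M nu) S = (\<integral>\<^sup>+y. emeasure mu ((\<lambda>x. (x, y)) -` S) \<partial>nu)"
    by (rule p.emeasure_pair_measure_alt2[OF Ss])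
  also have "\<dots> = (\<integral>\<^sup>+y. emeasure mu A \<partial>nu)"
  proof (rule nn_integral_cong_AE)
    show "AE y in nu. emeasure mu ((\<lambda>x. (x, y)) -` S) = emeasure mu A"
      using aeK2 by eventually_elim (simp add: S_def haar_shift[OF h1 _ A])
  qed
  also have "\<dots> = emeasure mu A" by (simp add: n.emeasure_space_1)
  finally have 1: "emeasure (mu \<Otimes>\<^sub>M nu) S = emeasure mu A" .
  have "emeasure (mu \<Otimes>\<^sub>M nu) S = (\<integral>\<^sup>+x. emeasure nu (Pair x -` S) \<partial>mu)"
    by (rule n.emeasure_pair_measure_alt[OF Ss])
  also have "\<dots> = (\<integral>\<^sup>+x. emeasure nu A \<partial>mu)"
  proof (rule nn_integral_cong_AE)
    show "AE x in mu. emeasure nu (Pair x -` S) = emeasure nu A"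
      using aeK1 proof eventually_elim
      case (elim x)
      have "Pair x -` S = {y. y + x \<in> A}" by (auto simp: S_def add.commute)
      then show ?case using haar_shift[OF h2 elim A] by simp
    qed
  qed
  also have "\<dots> = emeasure nu A" by (simp add: m.emeasure_space_1)
  finally show "emeasure mu A = emeasure nu A" using 1 by simp
qed

lemma haar_AE:
  assumes h: "haar_prob K mu" and K: "K \<in> sets borel"
  shows "AE x in mu. x \<in> K"
proof -
  interpret m: prob_space mu using h unfolding haar_prob_def by auto
  show ?thesis
    using h K by (subst m.AE_in_set_eq_1) (auto simp: haar_prob_def haar_space[OF h] m.emeasure_eq_measure)
qed

lemma dbl_meas: "(\<lambda>x::'a::{topological_ab_group_add, second_countable_topology}. x + x) \<in> borel_measurable borel"
  by (intro borel_measurable_add measurable_ident_sets refl)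

lemma haar_double_iff:
  fixes K :: "'a::{topological_ab_group_add, t2_space, second_countable_topology} set"
  assumes h: "haar_prob K mu" and K: "compact K" and sg: "subgroup_add K"
  shows "distr mu borel (\<lambda>x. x + x) = mu \<longleftrightarrow> corwin K"
proof -
  interpret m: prob_space mu using h unfolding haar_prob_def by auto
  have Kb: "K \<in> sets borel" using K by (simp add: compact_imp_closed borel_closed)
  have sp: "space mu = UNIV" and ss: "sets mu = sets borel" using haar_space[OF h] by auto
  have dm: "(\<lambda>x. x + x) \<in> measurable mu borel"
    using ss dbl_meas by (rule meas_cong_borel)
  have Ksub: "\<And>x y. x \<in> K \<Longrightarrow> y \<in> K \<Longrightarrow> x + y \<in> K" and Kneg: "\<And>x. x \<in> K \<Longrightarrow> - x \<in> K"
    and K0: "0 \<in> K" using sg unfolding subgroup_add_def by auto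
  have Kdiff: "\<And>x y. x \<in> K \<Longrightarrow> y \<in> K \<Longrightarrow> x - y \<in> K"
    using Ksub Kneg by (metis diff_conv_add_uminus)
  have muK: "emeasure mu K = 1" using h unfolding haar_prob_def by auto
  define D where "D = (\<lambda>x. x + x) ` K"
  have DK: "D \<subseteq> K" using Ksub by (auto simp: D_def)
  show ?thesis
  proof
    assume eq: "distr mu borel (\<lambda>x. x + x) = mu"
    have "compact D" unfolding D_def
      by (rule compact_continuous_image[OF _ K]) (intro continuous_intros)
    then have Db: "D \<in> sets borel" by (simp add: compact_imp_closed borel_closed)
    have muD: "emeasure mu D = 1"
    proof -
      have "emeasure mu D = emeasure mu ((\<lambda>x. x + x) -` D \<inter> space mu)"
        using eq emeasure_distr[OF dm Db] by simp
      also have "\<dots> \<ge> emeasure mu K"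
        using measurable_sets[OF dm Db] Ksub by (intro emeasure_mono) (auto simp: sp D_def)
      finally have "emeasure mu D \<ge> 1" using muK by simp
      moreover have "emeasure mu D \<le> 1" by (rule m.emeasure_le_1)
      ultimately show ?thesis by (rule antisym[rotated])
    qed
    have "K \<subseteq> D"
    proof
      fix x assume x: "x \<in> K"
      show "x \<in> D"
      proof (rule ccontr)
        assume nx: "x \<notin> D"
        define B where "B = {y. y + x \<in> D}"
        have Bm: "emeasure mu B = 1" using haar_shift[OF h x Db] muD by (simp add: B_def)
        have disj: "B \<inter> D = {}"
        proof (rule ccontr)
          assume "B \<inter> D \<noteq> {}"
          then obtain z w where z: "z \<in> K" and w: "w \<in> K" and e: "(z + z) + x = w + w"
            by (auto simp: B_def D_def)
          have "x = (w + w) - (z + z)" using e[symmetric] by simp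
          also have "\<dots> = (w - z) + (w - z)" by (simp add: algebra_simps)
          finally have "x = (w - z) + (w - z)" .
          then have "x \<in> D" using Kdiff[OF w z] by (auto simp: D_def)
          with nx show False by simp
        qed
        have Bb: "B \<in> sets mu"
        proof -
          have "(\<lambda>y. y + x) \<in> borel_measurable borel" by (rule trans_meas')
          from measurable_sets[OF this Db] show ?thesis by (simp add: B_def ss vimage_def)
        qed
        have "emeasure mu (B \<union> D) = emeasure mu B + emeasure mu D"
          using disj Bb Db ss by (intro plus_emeasure[symmetric]) auto
        also have "\<dots> = 2" using Bm muD by simp
        finally have "emeasure mu (B \<union> D) = 2" .
        moreover have "emeasure mu (B \<union> D) \<le> 1" by (rule m.emeasure_le_1)
        ultimately show False by simp
      qed
    qed
    then show "corwin K" unfolding corwin_def D_def[symmetric] using DK by blast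
  next
    assume c: "corwin K"
    have "haar_prob K (distr mu borel (\<lambda>x. x + x))"
      unfolding haar_prob_def
    proof (intro conjI ballI)
      show "prob_space (distr mu borel (\<lambda>x. x + x))" by (rule m.prob_space_distr[OF dm])
      show "sets (distr mu borel (\<lambda>x. x + x)) = sets borel" by simp
      have "emeasure (distr mu borel (\<lambda>x. x + x)) K = emeasure mu ((\<lambda>x. x + x) -` K \<inter> space mu)"
        by (rule emeasure_distr[OF dm Kb])
      also have "(\<lambda>x. x + x) -` K \<inter> space mu = (\<lambda>x. x + x) -` K" by (simp add: sp)
      also have "emeasure mu ((\<lambda>x. x + x) -` K) = 1"
      proof -
        have "emeasure mu K \<le> emeasure mu ((\<lambda>x. x + x) -` K)"
          using measurable_sets[OF dm Kb] Ksub by (intro emeasure_mono) (auto simp: sp)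
        moreover have "emeasure mu ((\<lambda>x. x + x) -` K) \<le> 1" by (rule m.emeasure_le_1)
        ultimately show ?thesis using muK by simp
      qed
      finally show "emeasure (distr mu borel (\<lambda>x. x + x)) K = 1" .
      fix x assume x: "x \<in> K"
      have "x \<in> (\<lambda>x. x + x) ` K" using c x unfolding corwin_def by simp
      then obtain z where z: "z \<in> K" and xz: "x = z + z" by blast
      have tz: "(\<lambda>y. z + y) \<in> measurable mu borel"
        using ss trans_meas by (rule meas_cong_borel)
      have tx: "(\<lambda>y. x + y) \<in> measurable borel borel" by (rule trans_meas)
      have "distr (distr mu borel (\<lambda>x. x + x)) borel (\<lambda>y. x + y) = distr mu borel ((\<lambda>y. x + y) \<circ> (\<lambda>x. x + x))"
        by (rule distr_distr[OF tx dm])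
      also have "(\<lambda>y. x + y) \<circ> (\<lambda>x. x + x) = (\<lambda>x. x + x) \<circ> (\<lambda>y. z + y)"
        by (auto simp: xz algebra_simps)
      also have "distr mu borel \<dots> = distr (distr mu borel (\<lambda>y. z + y)) borel (\<lambda>x. x + x)"
        by (rule distr_distr[symmetric, OF dbl_meas tz])
      also have "distr mu borel (\<lambda>y. z + y) = mu" using h z unfolding haar_prob_def by auto
      finally show "distr (distr mu borel (\<lambda>x. x + x)) borel (\<lambda>y. x + y) = distr mu borel (\<lambda>x. x + x)" .
    qed
    from haar_unique[OF this h Kb] show "distr mu borel (\<lambda>x. x + x) = mu" .
  qed
qed


theorem proposition2p6:
  fixes M :: "'w measure"
    and K :: "'a::{topological_ab_group_add, t2_space, second_countable_topology} set"
    and \<xi>1 \<xi>2 \<xi>3 :: "'w \<Rightarrow> 'a"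
    and \<alpha> :: "'w \<Rightarrow> bool"
  assumes "locally_compact_space (euclidean :: 'a topology)"
    and "compact K" and "subgroup_add K"
    and "prob_space M"
    and "\<xi>1 \<in> borel_measurable M" and "\<xi>2 \<in> borel_measurable M" and "\<xi>3 \<in> borel_measurable M"
    and "prob_space.indep_vars M (\<lambda>_. borel) (\<lambda>i. [\<xi>1, \<xi>2, \<xi>3] ! i) {0, 1, 2}"
    and "haar_prob K (distr M borel \<xi>1)"
    and "distr M borel \<xi>2 = distr M borel \<xi>1"
    and "distr M borel \<xi>3 = distr M borel \<xi>1"
    and "\<alpha> \<in> measurable M (count_space UNIV)"
    and "distr M (count_space UNIV) \<alpha> = measure_pmf (bernoulli_pmf (1/2))"
    and "distr M (count_space UNIV \<Otimes>\<^sub>M (borel \<Otimes>\<^sub>M borel \<Otimes>\<^sub>M borel))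
           (\<lambda>\<omega>. (\<alpha> \<omega>, (\<xi>1 \<omega>, \<xi>2 \<omega>, \<xi>3 \<omega>)))
         = distr M (count_space UNIV) \<alpha> \<Otimes>\<^sub>M
           distr M (borel \<Otimes>\<^sub>M borel \<Otimes>\<^sub>M borel) (\<lambda>\<omega>. (\<xi>1 \<omega>, \<xi>2 \<omega>, \<xi>3 \<omega>))"
  shows "distr M borel (\<lambda>\<omega>. \<xi>1 \<omega> + \<xi>1 \<omega>)
           = distr M borel (\<lambda>\<omega>. \<xi>1 \<omega> + \<xi>2 \<omega> + (if \<alpha> \<omega> then \<xi>3 \<omega> + \<xi>3 \<omega> else 0))
         \<longleftrightarrow> corwin K"
proof -
  note K = assms(2) and sg = assms(3)
  note m1 = assms(5) and m2 = assms(6) and m3 = assms(7) and ma = assms(12)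
  interpret P: prob_space M by (rule assms(4))
  define mu where "mu = distr M borel \<xi>1"
  have h: "haar_prob K mu" using assms(9) by (simp add: mu_def)
  have Kb: "K \<in> sets borel" using K by (simp add: compact_imp_closed borel_closed)
  have Ksub: "\<And>x y. x \<in> K \<Longrightarrow> y \<in> K \<Longrightarrow> x + y \<in> K" and K0: "0 \<in> K"
    using sg unfolding subgroup_add_def by auto
  interpret mu: prob_space mu using h unfolding haar_prob_def by auto
  have lhs: "distr M borel (\<lambda>\<omega>. \<xi>1 \<omega> + \<xi>1 \<omega>) = distr mu borel (\<lambda>x. x + x)"
    unfolding mu_def using distr_distr[OF dbl_meas m1] by (simp add: comp_def)
  let ?X = "\<lambda>i. [\<xi>1, \<xi>2, \<xi>3] ! i"
  have ind: "P.indep_vars (\<lambda>_. borel) ?X {0, 1, 2}" using assms(8) .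
  have "P.indep_var (PiM {0} (\<lambda>_. borel)) (\<lambda>\<omega>. restrict (\<lambda>i. ?X i \<omega>) {0})
          (PiM {1,2} (\<lambda>_. borel)) (\<lambda>\<omega>. restrict (\<lambda>i. ?X i \<omega>) {1,2})"
    by (rule P.indep_var_restrict[OF ind]) auto
  then have "P.indep_var (borel \<Otimes>\<^sub>M borel) ((\<lambda>f. (f 0, 0::'a)) \<circ> (\<lambda>\<omega>. restrict (\<lambda>i. ?X i \<omega>) {0}))
          (borel \<Otimes>\<^sub>M borel) ((\<lambda>f. (f 1, f 2)) \<circ> (\<lambda>\<omega>. restrict (\<lambda>i. ?X i \<omega>) {1,2}))"
  proof (rule P.indep_var_compose)
    show "(\<lambda>f. (f 0, 0::'a)) \<in> measurable (PiM {0::nat} (\<lambda>_. borel)) (borel \<Otimes>\<^sub>M (borel :: 'a measure))"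
      by (intro measurable_Pair measurable_component_singleton measurable_const) auto
    show "(\<lambda>f. (f 1, f 2)) \<in> measurable (PiM {1::nat,2} (\<lambda>_. borel)) (borel \<Otimes>\<^sub>M (borel :: 'a measure))"
      by (intro measurable_Pair measurable_component_singleton) auto
  qed
  moreover have "(\<lambda>f. (f 0, 0::'a)) \<circ> (\<lambda>\<omega>. restrict (\<lambda>i. ?X i \<omega>) {0}) = (\<lambda>\<omega>. (\<xi>1 \<omega>, 0::'a))" by (auto simp: fun_eq_iff)
  moreover have "(\<lambda>f. (f 1, f 2)) \<circ> (\<lambda>\<omega>. restrict (\<lambda>i. ?X i \<omega>) {1,2}) = (\<lambda>\<omega>. (\<xi>2 \<omega>, \<xi>3 \<omega>))"
    by (auto simp: fun_eq_iff)
  ultimately have ind1: "P.indep_var (borel \<Otimes>\<^sub>M borel) (\<lambda>\<omega>. (\<xi>1 \<omega>, 0::'a)) (borel \<Otimes>\<^sub>M borel) (\<lambda>\<omega>. (\<xi>2 \<omega>, \<xi>3 \<omega>))"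
    by metis
  define T23 where "T23 = distr M (borel \<Otimes>\<^sub>M borel) (\<lambda>\<omega>. (\<xi>2 \<omega>, \<xi>3 \<omega>))"
  define B where "B = distr M (count_space UNIV) \<alpha>"
  have m23: "(\<lambda>\<omega>. (\<xi>2 \<omega>, \<xi>3 \<omega>)) \<in> measurable M (borel \<Otimes>\<^sub>M borel)"
    using m2 m3 by (rule measurable_Pair)
  have m123: "(\<lambda>\<omega>. (\<xi>1 \<omega>, \<xi>2 \<omega>, \<xi>3 \<omega>)) \<in> measurable M (borel \<Otimes>\<^sub>M borel \<Otimes>\<^sub>M borel)"
    using m1 m23 by (rule measurable_Pair)
  interpret T23: prob_space T23 unfolding T23_def by (rule P.prob_space_distr[OF m23])
  interpret B: prob_space B unfolding B_def by (rule P.prob_space_distr[OF ma])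
  have T: "mu \<Otimes>\<^sub>M T23 = distr M (borel \<Otimes>\<^sub>M borel \<Otimes>\<^sub>M borel) (\<lambda>\<omega>. (\<xi>1 \<omega>, \<xi>2 \<omega>, \<xi>3 \<omega>))"
  proof (rule pair_measure_eqI)
    show "sigma_finite_measure mu" by (rule prob_space_imp_sigma_finite) (rule mu.prob_space_axioms)
    show "sigma_finite_measure T23" by (rule prob_space_imp_sigma_finite) (rule T23.prob_space_axioms)
    show "sets (mu \<Otimes>\<^sub>M T23) = sets (distr M (borel \<Otimes>\<^sub>M borel \<Otimes>\<^sub>M borel) (\<lambda>\<omega>. (\<xi>1 \<omega>, \<xi>2 \<omega>, \<xi>3 \<omega>)))"
      unfolding sets_distr by (rule sets_pair_measure_cong) (simp_all add: mu_def T23_def)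
    fix A C assume A: "A \<in> sets mu" and C: "C \<in> sets T23"
    have Ab: "A \<in> sets borel" using A by (simp add: mu_def)
    have Cb: "C \<in> sets (borel \<Otimes>\<^sub>M borel)" using C by (simp add: T23_def)
    have AU: "A \<times> (UNIV :: 'a set) \<in> sets (borel \<Otimes>\<^sub>M (borel :: 'a measure))"
      using Ab by (intro pair_measureI) auto
    have e1: "emeasure mu A = P.prob (\<xi>1 -` A \<inter> space M)"
      unfolding mu_def by (simp add: emeasure_distr[OF m1 Ab] P.emeasure_eq_measure)
    have e2: "emeasure T23 C = P.prob ((\<lambda>\<omega>. (\<xi>2 \<omega>, \<xi>3 \<omega>)) -` C \<inter> space M)"
      unfolding T23_def by (simp add: emeasure_distr[OF m23 Cb] P.emeasure_eq_measure)
    have ACs: "A \<times> C \<in> sets (borel \<Otimes>\<^sub>M borel \<Otimes>\<^sub>M borel)" using Ab Cb by (intro pair_measureI)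
    have e3: "emeasure (distr M (borel \<Otimes>\<^sub>M borel \<Otimes>\<^sub>M borel) (\<lambda>\<omega>. (\<xi>1 \<omega>, \<xi>2 \<omega>, \<xi>3 \<omega>))) (A \<times> C)
        = P.prob ((\<lambda>\<omega>. (\<xi>1 \<omega>, \<xi>2 \<omega>, \<xi>3 \<omega>)) -` (A \<times> C) \<inter> space M)"
      by (simp add: emeasure_distr[OF m123 ACs] P.emeasure_eq_measure)
    have "P.prob ((\<lambda>\<omega>. ((\<xi>1 \<omega>, 0::'a), (\<xi>2 \<omega>, \<xi>3 \<omega>))) -` ((A \<times> UNIV) \<times> C) \<inter> space M) =
      P.prob ((\<lambda>\<omega>. (\<xi>1 \<omega>, 0::'a)) -` (A \<times> UNIV) \<inter> space M) * P.prob ((\<lambda>\<omega>. (\<xi>2 \<omega>, \<xi>3 \<omega>)) -` C \<inter> space M)"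
      by (rule P.indep_varD[OF ind1 AU Cb])
    moreover have "(\<lambda>\<omega>. ((\<xi>1 \<omega>, 0::'a), (\<xi>2 \<omega>, \<xi>3 \<omega>))) -` ((A \<times> UNIV) \<times> C) \<inter> space M
       = (\<lambda>\<omega>. (\<xi>1 \<omega>, \<xi>2 \<omega>, \<xi>3 \<omega>)) -` (A \<times> C) \<inter> space M" by auto
    moreover have "(\<lambda>\<omega>. (\<xi>1 \<omega>, 0::'a)) -` (A \<times> UNIV) \<inter> space M = \<xi>1 -` A \<inter> space M" by auto
    ultimately show "emeasure mu A * emeasure T23 C = emeasure (distr M (borel \<Otimes>\<^sub>M borel \<Otimes>\<^sub>M borel) (\<lambda>\<omega>. (\<xi>1 \<omega>, \<xi>2 \<omega>, \<xi>3 \<omega>))) (A \<times> C)"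
      using e1 e2 e3 by (simp add: ennreal_mult)
  qed
  have J: "distr M (count_space UNIV \<Otimes>\<^sub>M (borel \<Otimes>\<^sub>M borel \<Otimes>\<^sub>M borel))
           (\<lambda>\<omega>. (\<alpha> \<omega>, (\<xi>1 \<omega>, \<xi>2 \<omega>, \<xi>3 \<omega>))) = B \<Otimes>\<^sub>M (mu \<Otimes>\<^sub>M T23)"
    using assms(14) T by (simp add: B_def)
  interpret MT: pair_prob_space mu T23 by unfold_locales
  interpret BMT: pair_prob_space B "mu \<Otimes>\<^sub>M T23" by unfold_locales
  define f where "f = (\<lambda>p::bool \<times> 'a \<times> 'a \<times> 'a. fst (snd p) + fst (snd (snd p)) +
      (if fst p then snd (snd (snd p)) + snd (snd (snd p)) else 0))"
  let ?S = "count_space UNIV \<Otimes>\<^sub>M (borel \<Otimes>\<^sub>M borel \<Otimes>\<^sub>M (borel :: 'a measure))"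
  have fm: "f \<in> borel_measurable ?S"
  proof -
    have c1: "(\<lambda>p. fst (snd p)) \<in> borel_measurable ?S"
      by (rule measurable_compose[OF measurable_snd measurable_fst])
    have c2: "(\<lambda>p. fst (snd (snd p))) \<in> borel_measurable ?S"
      by (rule measurable_compose[OF measurable_compose[OF measurable_snd measurable_snd] measurable_fst])
    have c3: "(\<lambda>p. snd (snd (snd p))) \<in> borel_measurable ?S"
      by (rule measurable_compose[OF measurable_compose[OF measurable_snd measurable_snd] measurable_snd])
    have pr: "{x \<in> space ?S. fst x} \<in> sets ?S"
    proof -
      have "{x \<in> space ?S. fst x} = {True} \<times> space (borel \<Otimes>\<^sub>M borel \<Otimes>\<^sub>M (borel :: 'a measure))"
        by (auto simp: space_pair_measure)
      also have "\<dots> \<in> sets ?S" by (intro pair_measureI) auto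
      finally show ?thesis .
    qed
    show ?thesis unfolding f_def
      by (intro borel_measurable_add c1 c2 measurable_If c3 measurable_const pr) auto
  qed
  have mall: "(\<lambda>\<omega>. (\<alpha> \<omega>, (\<xi>1 \<omega>, \<xi>2 \<omega>, \<xi>3 \<omega>))) \<in> measurable M ?S"
    using ma m123 by (rule measurable_Pair)
  have rhs0: "distr M borel (\<lambda>\<omega>. \<xi>1 \<omega> + \<xi>2 \<omega> + (if \<alpha> \<omega> then \<xi>3 \<omega> + \<xi>3 \<omega> else 0))
     = distr (B \<Otimes>\<^sub>M (mu \<Otimes>\<^sub>M T23)) borel f"
  proof -
    have fc: "f \<circ> (\<lambda>\<omega>. (\<alpha> \<omega>, (\<xi>1 \<omega>, \<xi>2 \<omega>, \<xi>3 \<omega>))) =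
       (\<lambda>\<omega>. \<xi>1 \<omega> + \<xi>2 \<omega> + (if \<alpha> \<omega> then \<xi>3 \<omega> + \<xi>3 \<omega> else 0))"
      by (auto simp: f_def fun_eq_iff)
    show ?thesis using distr_distr[OF fm mall] J fc by simp
  qed
  have aeK: "AE x in mu. x \<in> K" by (rule haar_AE[OF h Kb])
  have aeT: "AE q in T23. fst q \<in> K \<and> snd q \<in> K"
  proof -
    have h2: "haar_prob K (distr M borel \<xi>2)" using h assms(10) by (simp add: mu_def)
    have h3: "haar_prob K (distr M borel \<xi>3)" using h assms(11) by (simp add: mu_def)
    have KK: "{x \<in> space borel. x \<in> K} \<in> sets borel" using Kb by simp
    have a2: "AE \<omega> in M. \<xi>2 \<omega> \<in> K"
      using haar_AE[OF h2 Kb] by (subst (asm) AE_distr_iff[OF m2 KK])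
    have a3: "AE \<omega> in M. \<xi>3 \<omega> \<in> K"
      using haar_AE[OF h3 Kb] by (subst (asm) AE_distr_iff[OF m3 KK])
    have KK2: "{x \<in> space (borel \<Otimes>\<^sub>M borel). fst x \<in> K \<and> snd x \<in> K} \<in> sets (borel \<Otimes>\<^sub>M borel)"
    proof -
      have "{x \<in> space (borel \<Otimes>\<^sub>M borel). fst x \<in> K \<and> snd x \<in> K} = K \<times> K"
        by (auto simp: space_pair_measure)
      then show ?thesis using Kb by (simp add: pair_measureI)
    qed
    show ?thesis unfolding T23_def
      using a2 a3 by (subst AE_distr_iff[OF m23 KK2]) auto
  qed
  have spJ: "space (B \<Otimes>\<^sub>M (mu \<Otimes>\<^sub>M T23)) = UNIV"
    by (simp add: space_pair_measure B_def T23_def haar_space[OF h])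
  have setsJ: "sets (B \<Otimes>\<^sub>M (mu \<Otimes>\<^sub>M T23)) = sets ?S"
    by (intro sets_pair_measure_cong) (simp_all add: B_def T23_def haar_space[OF h])
  have fmJ: "f \<in> borel_measurable (B \<Otimes>\<^sub>M (mu \<Otimes>\<^sub>M T23))"
    using fm unfolding measurable_cong_sets[OF setsJ refl] .
  have rhs: "distr M borel (\<lambda>\<omega>. \<xi>1 \<omega> + \<xi>2 \<omega> + (if \<alpha> \<omega> then \<xi>3 \<omega> + \<xi>3 \<omega> else 0)) = mu"
    unfolding rhs0
  proof (rule measure_eqI)
    show "sets (distr (B \<Otimes>\<^sub>M (mu \<Otimes>\<^sub>M T23)) borel f) = sets mu" by (simp add: haar_space[OF h])
    fix A assume "A \<in> sets (distr (B \<Otimes>\<^sub>M (mu \<Otimes>\<^sub>M T23)) borel f)"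
    then have A: "A \<in> sets borel" by simp
    define S where "S = f -` A \<inter> space (B \<Otimes>\<^sub>M (mu \<Otimes>\<^sub>M T23))"
    have Ss: "S \<in> sets (B \<Otimes>\<^sub>M (mu \<Otimes>\<^sub>M T23))" unfolding S_def using fmJ A by (rule measurable_sets)
    have "emeasure (distr (B \<Otimes>\<^sub>M (mu \<Otimes>\<^sub>M T23)) borel f) A = emeasure (B \<Otimes>\<^sub>M (mu \<Otimes>\<^sub>M T23)) S"
      unfolding S_def by (rule emeasure_distr[OF fmJ A])
    also have "\<dots> = (\<integral>\<^sup>+a. emeasure (mu \<Otimes>\<^sub>M T23) (Pair a -` S) \<partial>B)"
      by (rule sigma_finite_measure.emeasure_pair_measure_alt[OF prob_space_imp_sigma_finite[OF MT.prob_space_axioms] Ss])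
    also have "\<dots> = (\<integral>\<^sup>+a. emeasure mu A \<partial>B)"
    proof (rule nn_integral_cong)
      fix a
      have Sa: "Pair a -` S \<in> sets (mu \<Otimes>\<^sub>M T23)" by (rule sets_Pair1[OF Ss])
      have "emeasure (mu \<Otimes>\<^sub>M T23) (Pair a -` S) = (\<integral>\<^sup>+q. emeasure mu ((\<lambda>x. (x, q)) -` (Pair a -` S)) \<partial>T23)"
        by (rule MT.emeasure_pair_measure_alt2[OF Sa])
      also have "\<dots> = (\<integral>\<^sup>+q. emeasure mu A \<partial>T23)"
      proof (rule nn_integral_cong_AE)
        show "AE q in T23. emeasure mu ((\<lambda>x. (x, q)) -` (Pair a -` S)) = emeasure mu A"
          using aeT
        proof eventually_elim
          case (elim q)
          define y where "y = fst q + (if a then snd q + snd q else 0)"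
          have yK: "y \<in> K" using elim Ksub K0 by (auto simp: y_def)
          have "(\<lambda>x. (x, q)) -` (Pair a -` S) = {x. x + y \<in> A}"
            by (auto simp: S_def spJ f_def y_def add.assoc)
          then show ?case using haar_shift[OF h yK A] by simp
        qed
      qed
      also have "\<dots> = emeasure mu A" by (simp add: T23.emeasure_space_1)
      finally show "emeasure (mu \<Otimes>\<^sub>M T23) (Pair a -` S) = emeasure mu A" .
    qed
    also have "\<dots> = emeasure mu A" by (simp add: B.emeasure_space_1)
    finally show "emeasure (distr (B \<Otimes>\<^sub>M (mu \<Otimes>\<^sub>M T23)) borel f) A = emeasure mu A" .
  qed
  show ?thesis unfolding lhs rhs by (rule haar_double_iff[OF h K sg])
qed

end
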